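(* Let $(s_i)_{i\in\mathbb{Z}}$ be a strictly increasing bi-infinite real sequence, unbounded above and below, and let $F:\mathbb{R}^2\to\mathbb{R}^d$ satisfy $$F(s,t)=\frac{s-s_i}{s_{i+1}-s_i}F(s_{i+1},t)+\frac{s_{i+1}-s}{s_{i+1}-s_i}F(s_i,t),\qquad s\in[s_i,s_{i+1}],\ t\in\mathbb{R},\ i\in\mathbb{Z}.$$ Suppose $\|[\sigma_1,\sigma_2;\tau_1,\tau_2]F\|_\infty\le L$ whenever $\sigma_1\ne\sigma_2$ both lie in $[s_i,s_{i+1}]$ for some $i\in\mathbb{Z}$ and $\tau_1\ne\tau_2$ are arbitrary reals. Then $F$ has the BMSDD property with constant $L$ in $\mathbb{R}^2$.
   Context: For $\sigma_1\ne\sigma_2$, $\tau_1\ne\tau_2$, $[\sigma_1,\sigma_2;\tau_1,\tau_2]F=\frac{F(\sigma_1,\tau_1)+F(\sigma_2,\tau_2)-F(\sigma_2,\tau_1)-F(\sigma_1,\tau_2)}{(\sigma_1-\sigma_2)(\tau_1-\tau_2)}$. $F$ has the BMSDD property with constant $L$ in $\mathbb{R}^2$ if $\|[\sigma_1,\sigma_2;\tau_1,\tau_2]F\|_\infty\le L$ for all reals $\sigma_1\ne\sigma_2$, $\tau_1\ne\tau_2$. *)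

theory Defs
  imports "HOL-Analysis.Analysis"
begin

definition mixed_dd :: "(real \<Rightarrow> real \<Rightarrow> real^'d) \<Rightarrow> real \<Rightarrow> real \<Rightarrow> real \<Rightarrow> real \<Rightarrow> real^'d" where
  "mixed_dd F \<sigma>1 \<sigma>2 \<tau>1 \<tau>2 =
     (1 / ((\<sigma>1 - \<sigma>2) * (\<tau>1 - \<tau>2))) *\<^sub>R (F \<sigma>1 \<tau>1 + F \<sigma>2 \<tau>2 - F \<sigma>2 \<tau>1 - F \<sigma>1 \<tau>2)"

definition sup_norm :: "real^'d \<Rightarrow> real" where
  "sup_norm x = Max (range (\<lambda>k. \<bar>x $ k\<bar>))"

definition BMSDD :: "(real \<Rightarrow> real \<Rightarrow> real^'d) \<Rightarrow> real \<Rightarrow> bool" where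
  "BMSDD F L \<longleftrightarrow> (\<forall>\<sigma>1 \<sigma>2 \<tau>1 \<tau>2. \<sigma>1 \<noteq> \<sigma>2 \<longrightarrow> \<tau>1 \<noteq> \<tau>2 \<longrightarrow>
      sup_norm (mixed_dd F \<sigma>1 \<sigma>2 \<tau>1 \<tau>2) \<le> L)"

end

theory Submission
  imports Defs
begin

lemma chain_lip:
  fixes s :: "int \<Rightarrow> real" and h :: "real \<Rightarrow> real"
  assumes mono: "strict_mono s"
    and loc: "\<And>i a b. s i \<le> a \<Longrightarrow> a \<le> b \<Longrightarrow> b \<le> s (i+1) \<Longrightarrow> \<bar>h a - h b\<bar> \<le> C * (b - a)"
  shows "s i \<le> a \<Longrightarrow> a \<le> b \<Longrightarrow> b \<le> s (i + int n) \<Longrightarrow> \<bar>h a - h b\<bar> \<le> C * (b - a)"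
proof (induction n arbitrary: a b)
  case 0
  then have "a = b" by simp
  then show ?case by simp
next
  case (Suc n)
  have m: "s (i + int n) \<le> s (i + int n + 1)"
    using mono by (simp add: strict_mono_less_eq)
  have eq: "i + int (Suc n) = i + int n + 1" by simp
  show ?case
  proof (cases "b \<le> s (i + int n)")
    case True
    then show ?thesis using Suc by blast
  next
    case nb: False
    show ?thesis
    proof (cases "a \<ge> s (i + int n)")
      case True
      have bb: "b \<le> s (i + int n + 1)" using Suc.prems(3) eq by metis
      then show ?thesis using loc[of "i + int n" a b] Suc.prems(2) True by blast
    next
      case False
      let ?m = "s (i + int n)"
      have 1: "\<bar>h a - h ?m\<bar> \<le> C * (?m - a)" using Suc.IH[of a ?m] Suc.prems False by simp
      have bb: "b \<le> s (i + int n + 1)" using Suc.prems(3) eq by metis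
      have 2: "\<bar>h ?m - h b\<bar> \<le> C * (b - ?m)" using loc[of "i + int n" ?m b] bb nb by simp
      have "\<bar>h a - h b\<bar> \<le> \<bar>h a - h ?m\<bar> + \<bar>h ?m - h b\<bar>" by linarith
      also have "\<dots> \<le> C * (b - a)" using 1 2 by (simp add: algebra_simps)
      finally show ?thesis .
    qed
  qed
qed

lemma global_lip:
  fixes s :: "int \<Rightarrow> real" and h :: "real \<Rightarrow> real"
  assumes mono: "strict_mono s"
    and above: "\<forall>M. \<exists>i. s i > M"
    and below: "\<forall>M. \<exists>i. s i < M"
    and loc: "\<And>i a b. s i \<le> a \<Longrightarrow> a \<le> b \<Longrightarrow> b \<le> s (i+1) \<Longrightarrow> \<bar>h a - h b\<bar> \<le> C * (b - a)"
    and ab: "a \<le> b"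
  shows "\<bar>h a - h b\<bar> \<le> C * (b - a)"
proof -
  obtain i where i: "s i < a" using below by blast
  obtain j where j: "s j > b" using above by blast
  have "s i < s j" using i j ab by linarith
  hence ij: "i < j" using mono by (meson not_less strict_mono_less_eq)
  have "j = i + int (nat (j - i))" using ij by simp
  hence "b \<le> s (i + int (nat (j - i)))" using j by simp
  thus ?thesis using chain_lip[OF mono loc, where i=i and a=a and b=b and n="nat (j - i)"] i ab by simp
qed

theorem lemma6:
  fixes s :: "int \<Rightarrow> real" and F :: "real \<Rightarrow> real \<Rightarrow> real^'d" and L :: real
  assumes mono: "strict_mono s"
    and above: "\<forall>M. \<exists>i. s i > M"
    and below: "\<forall>M. \<exists>i. s i < M"
    and interp: "\<And>i s' t. s i \<le> s' \<Longrightarrow> s' \<le> s (i + 1) \<Longrightarrow>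
        F s' t = ((s' - s i) / (s (i + 1) - s i)) *\<^sub>R F (s (i + 1)) t
               + ((s (i + 1) - s') / (s (i + 1) - s i)) *\<^sub>R F (s i) t"
    and local_bound: "\<And>i \<sigma>1 \<sigma>2 \<tau>1 \<tau>2.
        \<sigma>1 \<in> {s i .. s (i + 1)} \<Longrightarrow> \<sigma>2 \<in> {s i .. s (i + 1)} \<Longrightarrow> \<sigma>1 \<noteq> \<sigma>2 \<Longrightarrow> \<tau>1 \<noteq> \<tau>2 \<Longrightarrow>
        sup_norm (mixed_dd F \<sigma>1 \<sigma>2 \<tau>1 \<tau>2) \<le> L"
  shows "BMSDD F L"
  unfolding BMSDD_def
proof (intro allI impI)
  fix \<sigma>1 \<sigma>2 \<tau>1 \<tau>2 :: real
  assume s12: "\<sigma>1 \<noteq> \<sigma>2" and t12: "\<tau>1 \<noteq> \<tau>2"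
  have comp: "mixed_dd F a b \<tau>1 \<tau>2 $ k = ((F a \<tau>1 - F a \<tau>2) $ k - (F b \<tau>1 - F b \<tau>2) $ k) / ((a - b) * (\<tau>1 - \<tau>2))"
    for a b k
  proof -
    have "F a \<tau>1 + F b \<tau>2 - F b \<tau>1 - F a \<tau>2 = (F a \<tau>1 - F a \<tau>2) - (F b \<tau>1 - F b \<tau>2)"
      by (simp add: algebra_simps)
    then show ?thesis unfolding mixed_dd_def by simp
  qed
  have snk: "\<bar>x $ k\<bar> \<le> sup_norm x" for x :: "real^'d" and k
    unfolding sup_norm_def by (rule Max_ge) auto
  have "\<bar>mixed_dd F \<sigma>1 \<sigma>2 \<tau>1 \<tau>2 $ k\<bar> \<le> L" for k
  proof -
    define h where "h \<sigma> = (F \<sigma> \<tau>1 - F \<sigma> \<tau>2) $ k" for \<sigma>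
    define C where "C = L * \<bar>\<tau>1 - \<tau>2\<bar>"
    have tpos: "\<bar>\<tau>1 - \<tau>2\<bar> > 0" using t12 by simp
    have loc: "\<bar>h a - h b\<bar> \<le> C * (b - a)" if "s i \<le> a" "a \<le> b" "b \<le> s (i+1)" for i a b
    proof (cases "a = b")
      case True then show ?thesis by (simp add: C_def)
    next
      case False
      have "\<bar>mixed_dd F a b \<tau>1 \<tau>2 $ k\<bar> \<le> L"
        using snk local_bound[of a i b \<tau>1 \<tau>2] that False t12 by (meson atLeastAtMost_iff order_trans)
      hence "\<bar>h a - h b\<bar> / (\<bar>a - b\<bar> * \<bar>\<tau>1 - \<tau>2\<bar>) \<le> L"
        by (simp add: comp h_def abs_mult abs_divide)
      moreover have "\<bar>a - b\<bar> * \<bar>\<tau>1 - \<tau>2\<bar> > 0" using False tpos by simp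
      ultimately have "\<bar>h a - h b\<bar> \<le> L * (\<bar>a - b\<bar> * \<bar>\<tau>1 - \<tau>2\<bar>)"
        by (simp add: divide_le_eq)
      thus ?thesis using that by (simp add: C_def abs_if algebra_simps split: if_splits)
    qed
    have glob: "\<bar>h a - h b\<bar> \<le> C * \<bar>a - b\<bar>" for a b
    proof (cases "a \<le> b")
      case True
      then show ?thesis using global_lip[OF mono above below loc True] by simp
    next
      case False
      then show ?thesis using global_lip[OF mono above below loc, where a=b and b=a] by (simp add: abs_minus_commute)
    qed
    have "\<bar>mixed_dd F \<sigma>1 \<sigma>2 \<tau>1 \<tau>2 $ k\<bar> = \<bar>h \<sigma>1 - h \<sigma>2\<bar> / (\<bar>\<sigma>1 - \<sigma>2\<bar> * \<bar>\<tau>1 - \<tau>2\<bar>)"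
      by (simp add: comp h_def abs_mult abs_divide)
    also have "\<dots> \<le> L"
      using glob[of \<sigma>1 \<sigma>2] s12 tpos by (simp add: divide_le_eq C_def algebra_simps)
    finally show ?thesis .
  qed
  then show "sup_norm (mixed_dd F \<sigma>1 \<sigma>2 \<tau>1 \<tau>2) \<le> L"
    unfolding sup_norm_def by (subst Max_le_iff) auto
qed

end
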